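(* Let $n\ge 3$ and $\mathbf d\in\mathbb R_A^{\binom n2}$. Suppose $A_1$ is the unique Condorcet winner and $A_n$ the unique Condorcet loser of $\mathbf d$. Let $\mathbf d_{st}$ be the orthogonal projection of $\mathbf d$ onto $\mathbb{ST}_A^n$. Then $A_1$ is strictly ranked above $A_n$ in $\mathbf d_{st}$, i.e., the $(1,n)$ entry of $\mathbf d_{st}$ is strictly positive.
   Context: $\mathbb R_A^{\binom n2}$ denotes the space of vectors $\mathbf d=(d_{1,2},\dots,d_{1,n};d_{2,3},\dots;d_{n-1,n})$ indexed by pairs $i<j$ of $\{1,\dots,n\}$, with convention $d_{j,i}=-d_{i,j}$, carrying the standard Euclidean inner product. The entry $d_{i,j}$ compares alternatives $A_i,A_j$: $A_i$ is ranked above $A_j$ iff $d_{i,j}>0$. $A_j$ is a Condorcet winner of $\mathbf d$ if $d_{j,k}>0$ for all $k\ne j$, and a Condorcet loser if $d_{j,k}<0$ for all $k\neq j$. A vector is strongly transitive if $d_{i,j}+d_{j,k}=d_{i,k}$ for all triples $i,j,k$; $\mathbb{ST}_A^n$ is the linear subspace of strongly transitive vectors. *)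

theory Defs
  imports Main "HOL-Analysis.Analysis"
begin

text \<open>A vector d in R_A^(n choose 2) is represented as a function d :: nat => nat => real
  on index pairs of {1..n}; only the entries d i j with i < j are coordinates, and the
  convention d j i = - d i j is imposed by the predicate pair_vec.\<close>

definition pair_vec :: "nat \<Rightarrow> (nat \<Rightarrow> nat \<Rightarrow> real) \<Rightarrow> bool" where
  "pair_vec n d \<longleftrightarrow> (\<forall>i\<in>{1..n}. \<forall>j\<in>{1..n}. d j i = - d i j)"

definition pair_inner :: "nat \<Rightarrow> (nat \<Rightarrow> nat \<Rightarrow> real) \<Rightarrow> (nat \<Rightarrow> nat \<Rightarrow> real) \<Rightarrow> real" where
  "pair_inner n d e = (\<Sum>i\<in>{1..n}. \<Sum>j\<in>{i<..n}. d i j * e i j)"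

definition condorcet_winner :: "nat \<Rightarrow> (nat \<Rightarrow> nat \<Rightarrow> real) \<Rightarrow> nat \<Rightarrow> bool" where
  "condorcet_winner n d j \<longleftrightarrow> j \<in> {1..n} \<and> (\<forall>k\<in>{1..n}. k \<noteq> j \<longrightarrow> d j k > 0)"

definition condorcet_loser :: "nat \<Rightarrow> (nat \<Rightarrow> nat \<Rightarrow> real) \<Rightarrow> nat \<Rightarrow> bool" where
  "condorcet_loser n d j \<longleftrightarrow> j \<in> {1..n} \<and> (\<forall>k\<in>{1..n}. k \<noteq> j \<longrightarrow> d j k < 0)"

definition strongly_transitive :: "nat \<Rightarrow> (nat \<Rightarrow> nat \<Rightarrow> real) set" where
  "strongly_transitive n = {s. pair_vec n s \<and>
     (\<forall>i\<in>{1..n}. \<forall>j\<in>{1..n}. \<forall>k\<in>{1..n}. s i j + s j k = s i k)}"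

definition is_st_projection :: "nat \<Rightarrow> (nat \<Rightarrow> nat \<Rightarrow> real) \<Rightarrow> (nat \<Rightarrow> nat \<Rightarrow> real) \<Rightarrow> bool" where
  "is_st_projection n d s \<longleftrightarrow> s \<in> strongly_transitive n \<and>
     (\<forall>t\<in>strongly_transitive n. pair_inner n (\<lambda>i j. d i j - s i j) t = 0)"

end

theory Submission
  imports Defs
begin

lemma inner_potential:
  fixes r :: "nat \<Rightarrow> nat \<Rightarrow> real" and p :: "nat \<Rightarrow> real"
  assumes as: "\<forall>i\<in>{1..n}. \<forall>j\<in>{1..n}. r j i = - r i j"
  shows "pair_inner n r (\<lambda>i j. p i - p j) = (\<Sum>i\<in>{1..n}. p i * (\<Sum>j\<in>{1..n}. r i j))"
proof -
  let ?I = "{1..n::nat}"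
  have set_eq: "\<And>i. i \<in> ?I \<Longrightarrow> {i<..n} = {j\<in>?I. i < j}" by auto
  have "pair_inner n r (\<lambda>i j. p i - p j) = (\<Sum>i\<in>?I. \<Sum>j\<in>{j\<in>?I. i < j}. r i j * (p i - p j))"
    unfolding pair_inner_def by (rule sum.cong) (auto simp: set_eq)
  also have "\<dots> = (\<Sum>i\<in>?I. \<Sum>j\<in>{j\<in>?I. i < j}. r i j * p i) - (\<Sum>i\<in>?I. \<Sum>j\<in>{j\<in>?I. i < j}. r i j * p j)"
    by (simp add: right_diff_distrib sum_subtractf)
  also have "(\<Sum>i\<in>?I. \<Sum>j\<in>{j\<in>?I. i < j}. r i j * p j) = (\<Sum>j\<in>?I. \<Sum>i\<in>{i\<in>?I. i < j}. r i j * p j)"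
    by (rule sum.swap_restrict) auto
  also have "\<dots> = (\<Sum>i\<in>?I. \<Sum>j\<in>{j\<in>?I. j < i}. - (r i j * p i))"
  proof (intro sum.cong refl)
    fix i j assume "i \<in> ?I" "j \<in> {j\<in>?I. j < i}"
    then have "r j i = - r i j" using as by blast
    then show "r j i * p i = - (r i j * p i)" by simp
  qed
  also have "(\<Sum>i\<in>?I. \<Sum>j\<in>{j\<in>?I. i < j}. r i j * p i) - (\<Sum>i\<in>?I. \<Sum>j\<in>{j\<in>?I. j < i}. - (r i j * p i))
     = (\<Sum>i\<in>?I. p i * ((\<Sum>j\<in>{j\<in>?I. i < j}. r i j) + (\<Sum>j\<in>{j\<in>?I. j < i}. r i j)))"
    by (simp add: sum_negf distrib_left sum.distrib sum_distrib_left mult.commute)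
  also have "\<dots> = (\<Sum>i\<in>?I. p i * (\<Sum>j\<in>?I. r i j))"
  proof (rule sum.cong[OF refl])
    fix i assume i: "i \<in> ?I"
    have "r i i = - r i i" using as i by blast
    then have rii: "r i i = 0" by simp
    have eqI: "?I = {j\<in>?I. i < j} \<union> ({j\<in>?I. j < i} \<union> {i})" using i by auto
    have "(\<Sum>j\<in>?I. r i j) = (\<Sum>j\<in>{j\<in>?I. i < j} \<union> ({j\<in>?I. j < i} \<union> {i}). r i j)"
      by (rule arg_cong[where f="sum (r i)", OF eqI])
    also have "\<dots> = (\<Sum>j\<in>{j\<in>?I. i < j}. r i j) + (\<Sum>j\<in>{j\<in>?I. j < i} \<union> {i}. r i j)"
      by (rule sum.union_disjoint) auto
    also have "(\<Sum>j\<in>{j\<in>?I. j < i} \<union> {i}. r i j) = (\<Sum>j\<in>{j\<in>?I. j < i}. r i j) + r i i"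
      by (subst sum.union_disjoint) auto
    finally show "p i * ((\<Sum>j\<in>{j\<in>?I. i < j}. r i j) + (\<Sum>j\<in>{j\<in>?I. j < i}. r i j)) = p i * (\<Sum>j\<in>?I. r i j)"
      using rii by simp
  qed
  finally show ?thesis .
qed

theorem theorem3:
  fixes n :: nat and d dst :: "nat \<Rightarrow> nat \<Rightarrow> real"
  assumes "n \<ge> 3"
    and "pair_vec n d"
    and "condorcet_winner n d 1" and "\<forall>j. condorcet_winner n d j \<longrightarrow> j = 1"
    and "condorcet_loser n d n" and "\<forall>j. condorcet_loser n d j \<longrightarrow> j = n"
    and "is_st_projection n d dst"
  shows "dst 1 n > 0"
proof -
  let ?I = "{1..n::nat}"
  have st: "dst \<in> strongly_transitive n" and orth: "\<forall>t\<in>strongly_transitive n. pair_inner n (\<lambda>i j. d i j - dst i j) t = 0"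
    using assms(7) unfolding is_st_projection_def by auto
  have pd: "\<forall>i\<in>?I. \<forall>j\<in>?I. d j i = - d i j" using assms(2) unfolding pair_vec_def by blast
  have ps: "\<forall>i\<in>?I. \<forall>j\<in>?I. dst j i = - dst i j" using st unfolding strongly_transitive_def pair_vec_def by blast
  have tr: "\<forall>i\<in>?I. \<forall>j\<in>?I. \<forall>k\<in>?I. dst i j + dst j k = dst i k" using st unfolding strongly_transitive_def by blast
  have pdr: "\<And>i j. i \<in> ?I \<Longrightarrow> j \<in> ?I \<Longrightarrow> d j i = - d i j" using pd by blast
  have trr: "\<And>i j k. i \<in> ?I \<Longrightarrow> j \<in> ?I \<Longrightarrow> k \<in> ?I \<Longrightarrow> dst i j + dst j k = dst i k" using tr by blast
  have oneI: "1 \<in> ?I" and nI: "n \<in> ?I" using assms(1) by auto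
  define p :: "nat \<Rightarrow> real" where "p i = (if i = 1 then 1 else 0) - (if i = n then 1 else 0)" for i
  have tST: "(\<lambda>i j. p i - p j) \<in> strongly_transitive n"
    unfolding strongly_transitive_def pair_vec_def by auto
  have r_as: "\<forall>i\<in>?I. \<forall>j\<in>?I. (\<lambda>i j. d i j - dst i j) j i = - (\<lambda>i j. d i j - dst i j) i j"
  proof (intro ballI)
    fix i j assume ij: "i \<in> ?I" "j \<in> ?I"
    have "d j i = - d i j" "dst j i = - dst i j" using pd ps ij by blast+
    then show "(\<lambda>i j. d i j - dst i j) j i = - (\<lambda>i j. d i j - dst i j) i j" by simp
  qed
  have "0 = pair_inner n (\<lambda>i j. d i j - dst i j) (\<lambda>i j. p i - p j)" using orth tST by auto
  also have "\<dots> = (\<Sum>i\<in>?I. p i * (\<Sum>j\<in>?I. d i j - dst i j))"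
    by (rule inner_potential[OF r_as])
  also have "\<dots> = (\<Sum>i\<in>?I. (if i = 1 then (\<Sum>j\<in>?I. d i j - dst i j) else 0)) - (\<Sum>i\<in>?I. (if i = n then (\<Sum>j\<in>?I. d i j - dst i j) else 0))"
    unfolding sum_subtractf[symmetric] by (rule sum.cong[OF refl]) (simp add: p_def left_diff_distrib)
  also have "\<dots> = (\<Sum>j\<in>?I. d 1 j - dst 1 j) - (\<Sum>j\<in>?I. d n j - dst n j)"
    by (simp only: sum.delta finite_atLeastAtMost oneI nI if_True)
  also have "\<dots> = (\<Sum>j\<in>?I. d 1 j + d j n) - (\<Sum>j\<in>?I. dst 1 j - dst n j)"
  proof -
    have "(\<Sum>j\<in>?I. d j n) = - (\<Sum>j\<in>?I. d n j)"
    proof -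
      have "(\<Sum>j\<in>?I. d j n) = (\<Sum>j\<in>?I. - d n j)"
      proof (rule sum.cong[OF refl])
        fix j assume "j \<in> ?I"
        then show "d j n = - d n j" using pdr[OF nI] by blast
      qed
      then show ?thesis by (simp add: sum_negf)
    qed
    then show ?thesis by (simp add: sum.distrib sum_subtractf)
  qed
  also have "(\<Sum>j\<in>?I. dst 1 j - dst n j) = (\<Sum>j\<in>?I. dst 1 n)"
  proof (rule sum.cong[OF refl])
    fix j assume "j \<in> ?I"
    then have "dst 1 n + dst n j = dst 1 j" using trr[OF oneI nI] by blast
    then show "dst 1 j - dst n j = dst 1 n" by simp
  qed
  finally have eq: "real n * dst 1 n = (\<Sum>j\<in>?I. d 1 j + d j n)" by simp
  have w: "\<And>k. k \<in> ?I \<Longrightarrow> k \<noteq> 1 \<Longrightarrow> d 1 k > 0" using assms(3) unfolding condorcet_winner_def by auto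
  have l: "\<And>k. k \<in> ?I \<Longrightarrow> k \<noteq> n \<Longrightarrow> d n k < 0" using assms(5) unfolding condorcet_loser_def by auto
  have pos: "(\<Sum>j\<in>?I. d 1 j + d j n) > 0"
  proof (rule sum_pos)
    fix j assume j: "j \<in> ?I"
    have "d 1 1 = - d 1 1" "d n n = - d n n" using pdr[OF oneI oneI] pdr[OF nI nI] by blast+
    then have d11: "d 1 1 = 0" "d n n = 0" by simp_all
    have "d j n = - d n j" using pdr[OF nI j] by blast
    then show "d 1 j + d j n > 0"
      using w[of j] l[of j] w[of n] j d11 assms(1) by (cases "j = 1"; cases "j = n") auto
  qed (use assms(1) in auto)
  have h: "0 < real n * dst 1 n" using eq pos by linarith
  moreover have "real n > 0" using assms(1) by simp
  ultimately show ?thesis by (simp add: zero_less_mult_iff)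
qed

end
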